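(* Let $k$ be a field, let $n,m\ge0$ be integers, $d_1,\ldots,d_m$ positive integers, and $h_\bullet=|n;d_1,\ldots,d_m|$ the associated Fröberg sequence. Let $l=n$ if $n\ge1$ and $l=1$ if $n=0$. Then there is an almost reverse lexicographic ideal $K$ in $R=k[x_1,\ldots,x_l]$ with $H(R/K,d)=h_d$ for all $d\ge0$.
   Context: For $P=\sum p_iz^i\in\mathbb{Z}[[z]]$ let $t=\min\{d:p_d\le0\}$ and $|P|=\sum q_iz^i$ with $q_i=p_i$ for $i<t$, $q_i=0$ for $i\ge t$. The Fröberg sequence $|n;d_1,\ldots,d_m|$ (written $|n;\emptyset|$ if $m=0$) is the sequence $(h_0,h_1,\ldots)$ with $\sum h_iz^i=\left|\prod_{j=1}^m(1-z^{d_j})/(1-z)^n\right|$. $H(R/K,d)=\dim_k(R/K)_d$. Degree reverse lexicographic order: for $M=x^\alpha,N=x^\beta$, $M>N$ iff $\deg M>\deg N$, or degrees equal and for the largest $s$ with $\alpha_s\neq\beta_s$ one has $\alpha_s<\beta_s$. A monomial ideal $K$ is almost reverse lexicographic if for every monomial $M$ and every minimal monomial generator $N$ of $K$ with $\deg M=\deg N$ and $M>N$, $M\in K$ (the zero ideal counts). *)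

theory Defs
  imports "HOL-Computational_Algebra.Formal_Power_Series"
begin

(* Generating series  prod_j (1 - z^{d_j}) / (1 - z)^n, computed over the rationals
   (its coefficients are integers). *)
definition froberg_series :: "nat \<Rightarrow> nat list \<Rightarrow> rat fps" where
  "froberg_series n ds =
     (\<Prod>j<length ds. (1 - fps_X ^ (ds ! j))) * inverse ((1 - fps_X) ^ n)"

definition trunc_pos :: "rat fps \<Rightarrow> nat \<Rightarrow> rat" where
  "trunc_pos P i = (if \<forall>j\<le>i. fps_nth P j > 0 then fps_nth P i else 0)"

definition froberg :: "nat \<Rightarrow> nat list \<Rightarrow> nat \<Rightarrow> rat" where
  "froberg n ds = trunc_pos (froberg_series n ds)"

(* Monomials of R = k[x_1,...,x_l]: exponent vectors; variable x_{i+1} has index i. *)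
definition monomials :: "nat \<Rightarrow> (nat \<Rightarrow> nat) set" where
  "monomials l = {a. \<forall>i\<ge>l. a i = 0}"

definition mdeg :: "nat \<Rightarrow> (nat \<Rightarrow> nat) \<Rightarrow> nat" where
  "mdeg l a = (\<Sum>i<l. a i)"

definition mdvd :: "(nat \<Rightarrow> nat) \<Rightarrow> (nat \<Rightarrow> nat) \<Rightarrow> bool" where
  "mdvd a b \<longleftrightarrow> (\<forall>i. a i \<le> b i)"

(* A monomial ideal of R, represented by its set of monomials:
   a set of monomials closed under multiplication by monomials. *)
definition monomial_ideal :: "nat \<Rightarrow> (nat \<Rightarrow> nat) set \<Rightarrow> bool" where
  "monomial_ideal l K \<longleftrightarrow> K \<subseteq> monomials l \<and>
     (\<forall>a\<in>K. \<forall>b\<in>monomials l. mdvd a b \<longrightarrow> b \<in> K)"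

definition min_gens :: "nat \<Rightarrow> (nat \<Rightarrow> nat) set \<Rightarrow> (nat \<Rightarrow> nat) set" where
  "min_gens l K = {a\<in>K. \<forall>b\<in>K. mdvd b a \<longrightarrow> b = a}"

(* degree reverse lexicographic order: revlex_gt l a b  means  x^a > x^b *)
definition revlex_gt :: "nat \<Rightarrow> (nat \<Rightarrow> nat) \<Rightarrow> (nat \<Rightarrow> nat) \<Rightarrow> bool" where
  "revlex_gt l a b \<longleftrightarrow> mdeg l a > mdeg l b \<or>
     (mdeg l a = mdeg l b \<and> (\<exists>s<l. a s \<noteq> b s \<and> (\<forall>t. s < t \<and> t < l \<longrightarrow> a t = b t) \<and> a s < b s))"

definition almost_revlex :: "nat \<Rightarrow> (nat \<Rightarrow> nat) set \<Rightarrow> bool" where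
  "almost_revlex l K \<longleftrightarrow>
     (\<forall>M\<in>monomials l. \<forall>N\<in>min_gens l K. mdeg l M = mdeg l N \<and> revlex_gt l M N \<longrightarrow> M \<in> K)"

(* Hilbert function of R/K for a monomial ideal K: dim_k (R/K)_d equals the number
   of degree-d monomials not in K (standard monomials form a k-basis). *)
definition hilb_quot :: "nat \<Rightarrow> (nat \<Rightarrow> nat) set \<Rightarrow> nat \<Rightarrow> nat" where
  "hilb_quot l K d = card {a\<in>monomials l. mdeg l a = d \<and> a \<notin> K}"

end

theory Submission
  imports Defs
begin


lemma nth_mult_1mXe: fixes F :: "rat fps" shows "fps_nth (F * (1 - fps_X ^ e)) d = fps_nth F d - (if d < e then 0 else fps_nth F (d - e))"
proof -
  have "F * (1 - fps_X ^ e) = F - fps_X ^ e * F" by (simp add: algebra_simps)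
  then show ?thesis by (simp add: fps_X_power_mult_nth)
qed

lemma trunc_pos_nonneg: "trunc_pos P d \<ge> 0"
  unfolding trunc_pos_def by (auto intro: less_imp_le)

lemma trunc_pos_eqI:
  assumes "\<And>d. (\<forall>j\<le>d. fps_nth P j > 0) \<longleftrightarrow> (\<forall>j\<le>d. fps_nth Q j > 0)"
    and "\<And>d. (\<forall>j\<le>d. fps_nth P j > 0) \<Longrightarrow> fps_nth P d = fps_nth Q d"
  shows "trunc_pos P = trunc_pos Q"
  using assms unfolding trunc_pos_def by (intro ext) auto

lemma F1:
  fixes P :: "rat fps"
  assumes e: "e \<ge> 1"
  shows "trunc_pos (Abs_fps (trunc_pos P) * (1 - fps_X ^ e)) = trunc_pos (P * (1 - fps_X ^ e))"
proof (rule ext)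
  fix d
  let ?A = "P * (1 - fps_X ^ e)" and ?B = "Abs_fps (trunc_pos P) * (1 - fps_X ^ e)"
  show "trunc_pos ?B d = trunc_pos ?A d"
  proof (cases "\<forall>j\<le>d. fps_nth P j > 0")
    case True
    then have q: "\<And>j. j \<le> d \<Longrightarrow> trunc_pos P j = fps_nth P j"
      unfolding trunc_pos_def by auto
    have "\<And>j. j \<le> d \<Longrightarrow> fps_nth ?B j = fps_nth ?A j"
      by (simp add: nth_mult_1mXe q)
    then show ?thesis unfolding trunc_pos_def by auto
  next
    case False
    define t where "t = (LEAST j. j \<le> d \<and> \<not> fps_nth P j > 0)"
    have t: "t \<le> d" "\<not> fps_nth P t > 0" using False unfolding t_def
      by (metis (mono_tags, lifting) LeastI not_less)+
    have tmin: "\<And>j. j < t \<Longrightarrow> fps_nth P j > 0"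
      using t unfolding t_def by (metis (mono_tags, lifting) dual_order.trans less_imp_le not_less_Least)
    have qt: "trunc_pos P t = 0" using t unfolding trunc_pos_def by auto
    have qj: "\<And>j. j < t \<Longrightarrow> trunc_pos P j = fps_nth P j"
      unfolding trunc_pos_def using tmin by auto
    have A: "\<not> fps_nth ?A t > 0"
      using t tmin[of "t - e"] e by (auto simp: nth_mult_1mXe)
    have B: "\<not> fps_nth ?B t > 0"
      using tmin[of "t - e"] e qj[of "t - e"] qt by (auto simp: nth_mult_1mXe)
    have A': "\<not>(\<forall>j\<le>d. 0 < fps_nth ?A j)" using A t by auto
    have B': "\<not>(\<forall>j\<le>d. 0 < fps_nth ?B j)" using B t by auto
    show ?thesis using A' B' by (simp only: trunc_pos_def if_False)
  qed
qed


definition Dh :: "(nat \<Rightarrow> rat) \<Rightarrow> nat \<Rightarrow> rat" where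
  "Dh h d = h d - (if d = 0 then 0 else h (d - 1))"

lemma nth_Dh: "fps_nth (Abs_fps h * (1 - fps_X)) d = Dh h d"
  using nth_mult_1mXe[of "Abs_fps h" 1 d] by (auto simp: Dh_def)

definition shp :: "(nat \<Rightarrow> rat) \<Rightarrow> bool" where
  "shp g \<longleftrightarrow> (\<forall>d1 d2. 0 < d1 \<and> d1 \<le> d2 \<and> g d1 \<le> g (d1 - 1) \<longrightarrow> g d2 \<le> g (d2 - 1))"

fun fshape :: "nat \<Rightarrow> (nat \<Rightarrow> rat) \<Rightarrow> bool" where
  "fshape 0 h = (h = (\<lambda>d. if d = 0 then 1 else 0))"
| "fshape (Suc k) h = (h 0 = 1 \<and> (\<forall>d. h d \<in> \<nat>) \<and> shp h \<and>
      fshape k (trunc_pos (Abs_fps h * (1 - fps_X))))"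

lemma shp_noninc:
  assumes "shp g" "0 < j" "g j \<le> g (j - 1)" "j - 1 \<le> b" "b \<le> a"
  shows "g a \<le> g b"
  using assms(5)
proof (induction a)
  case 0 then show ?case by simp
next
  case (Suc a)
  show ?case
  proof (cases "b = Suc a")
    case True then show ?thesis by simp
  next
    case False
    then have "b \<le> a" using Suc by simp
    then have "g a \<le> g b" using Suc by simp
    moreover have "g (Suc a) \<le> g a"
    proof -
      have "j \<le> Suc a" using assms(4) \<open>b \<le> a\<close> by simp
      have "0 < j \<and> j \<le> Suc a \<and> g j \<le> g (j - 1) \<longrightarrow> g (Suc a) \<le> g (Suc a - 1)"
        using assms(1) unfolding shp_def by blast
      then show ?thesis using assms(2,3) \<open>j \<le> Suc a\<close> by simp
    qed
    ultimately show ?thesis by simp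
  qed
qed

lemma strict_mono_seg:
  fixes g :: "nat \<Rightarrow> rat"
  assumes "\<And>j. 1 \<le> j \<Longrightarrow> j \<le> m \<Longrightarrow> g (j - 1) < (g j :: rat)" "a < b" "b \<le> m"
  shows "g a < g b"
  using assms(2,3)
proof (induction b)
  case 0 then show ?case by simp
next
  case (Suc b)
  have "g b < g (Suc b)" using assms(1)[of "Suc b"] Suc by simp
  then show ?case using Suc by (cases "a = b") auto
qed

lemma fshape_Nats: "fshape n h \<Longrightarrow> h d \<in> \<nat>"
  by (cases n) auto

lemma fshape_nonneg: assumes "fshape n h" shows "h d \<ge> 0"
proof -
  have "h d \<in> \<nat>" using assms by (rule fshape_Nats)
  then obtain k where "h d = of_nat k" by (auto elim: Nats_cases)
  then show ?thesis by simp
qed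

lemma fshape_shp: "fshape n h \<Longrightarrow> shp h"
  by (cases n) (auto simp: shp_def)

lemma fshape_0: "fshape n h \<Longrightarrow> h 0 = 1"
  by (cases n) auto

lemma lemD:
  fixes g :: "nat \<Rightarrow> rat"
  assumes sh: "shp g" and nn: "\<And>d. g d \<ge> 0" and e: "1 \<le> e"
    and d: "1 \<le> d1" "d1 \<le> d2"
    and w1: "g d1 - (if d1 < e then 0 else g (d1 - e)) \<le> 0"
  shows "g d2 - (if d2 < e then 0 else g (d2 - e)) \<le> 0"
proof (cases "\<forall>j. 1 \<le> j \<and> j \<le> d1 \<longrightarrow> g (j - 1) < g j")
  case True
  then have sm: "\<And>a b. a < b \<Longrightarrow> b \<le> d1 \<Longrightarrow> g a < g b"
    using strict_mono_seg[of d1 g] by blast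
  show ?thesis
  proof (cases "d1 < e")
    case True
    then show ?thesis using w1 sm[of 0 d1] nn[of 0] d by auto
  next
    case False
    then show ?thesis using w1 sm[of "d1 - e" d1] e d by auto
  qed
next
  case False
  define j0 where "j0 = (LEAST j. 1 \<le> j \<and> j \<le> d1 \<and> \<not> g (j - 1) < g j)"
  have j0: "1 \<le> j0" "j0 \<le> d1" "g j0 \<le> g (j0 - 1)"
    using False LeastI_ex[of "\<lambda>j. 1 \<le> j \<and> j \<le> d1 \<and> \<not> g (j - 1) < g j"]
    unfolding j0_def by auto
  have smj: "\<And>j. 1 \<le> j \<Longrightarrow> j \<le> j0 - 1 \<Longrightarrow> g (j - 1) < g j"
  proof -
    fix j assume "1 \<le> j" "j \<le> j0 - 1"
    then have "j < j0" "j \<le> d1" using j0 by auto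
    then show "g (j - 1) < g j" using not_less_Least[of j "\<lambda>j. 1 \<le> j \<and> j \<le> d1 \<and> \<not> g (j - 1) < g j"]
      \<open>1 \<le> j\<close> unfolding j0_def by blast
  qed
  have sm: "\<And>a b. a < b \<Longrightarrow> b \<le> j0 - 1 \<Longrightarrow> g a < g b"
    using strict_mono_seg[of "j0 - 1" g] smj by blast
  have ni: "\<And>a b. j0 - 1 \<le> b \<Longrightarrow> b \<le> a \<Longrightarrow> g a \<le> g b"
    using shp_noninc[OF sh _ j0(3)] j0 by auto
  have gd: "g d2 \<le> g d1" using ni[of d1 d2] j0 d by auto
  show ?thesis
  proof (cases "d2 < e")
    case True
    then have "d1 < e" using d by auto
    then show ?thesis using True w1 gd by auto
  next
    case False
    show ?thesis
    proof (cases "j0 - 1 \<le> d2 - e")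
      case True
      then show ?thesis using ni[of "d2 - e" d2] False by auto
    next
      case nle: False
      show ?thesis
      proof (cases "d1 < e")
        case True
        then show ?thesis using w1 gd nn[of "d2 - e"] False by auto
      next
        case False2: False
        have "g (d1 - e) \<le> g (d2 - e)"
          proof (cases "d1 = d2")
          case False3: False
          have "d1 - e < d2 - e" using False3 d False2 by arith
          then show ?thesis using sm[of "d1 - e" "d2 - e"] nle by auto
        qed auto
        then show ?thesis using w1 gd False False2 by auto
      qed
    qed
  qed
qed


lemma Nats_diff_pos:
  fixes x y :: rat
  assumes "x \<in> \<nat>" "y \<in> \<nat>" "x - y > 0"
  shows "x - y \<in> \<nat>"
proof -
  obtain a b where ab: "x = of_nat a" "y = of_nat b" using assms(1,2) by (auto elim!: Nats_cases)
  then have "b \<le> a" using assms(3) by simp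
  then have "x - y = of_nat (a - b)" using ab by (simp add: of_nat_diff)
  then show ?thesis by simp
qed

lemma closure:
  assumes "fshape n h" "1 \<le> e"
  shows "fshape n (trunc_pos (Abs_fps h * (1 - fps_X ^ e)))"
  using assms
proof (induction n arbitrary: h e)
  case 0
  then have h: "h = (\<lambda>d. if d = 0 then 1 else 0)" by simp
  have e1: "1 \<le> e" using 0 by simp
  let ?P = "Abs_fps h * (1 - fps_X ^ e)"
  have c: "fps_nth ?P d = h d - (if d < e then 0 else h (d - e))" for d
    by (simp add: nth_mult_1mXe)
  have "trunc_pos ?P d = (if d = 0 then 1 else 0)" for d
  proof (cases d)
    case 0 then show ?thesis using c[of 0] h e1 by (simp add: trunc_pos_def)
  next
    case (Suc d')
    have "\<not> fps_nth ?P 1 > 0" using c[of 1] h e1 by auto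
    then have "\<not> (\<forall>j\<le>d. fps_nth ?P j > 0)" using Suc by auto
    then show ?thesis using Suc unfolding trunc_pos_def by auto
  qed
  then show ?case by auto
next
  case (Suc k)
  note fs = Suc.prems(1)
  have h0: "h 0 = 1" and hN: "\<And>d. h d \<in> \<nat>" and sh: "shp h"
    and gk: "fshape k (trunc_pos (Abs_fps h * (1 - fps_X)))" using fs by auto
  define c where "c d = h d - (if d < e then 0 else h (d - e))" for d
  let ?P = "Abs_fps h * (1 - fps_X ^ e)"
  define h' where "h' = trunc_pos ?P"
  have cP: "fps_nth ?P d = c d" for d by (simp add: nth_mult_1mXe c_def)
  have h'def: "h' d = (if \<forall>j\<le>d. c j > 0 then c d else 0)" for d
    unfolding h'_def trunc_pos_def cP ..
  have c0: "c 0 = 1" using h0 Suc.prems(2) by (simp add: c_def)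
  have A: "h' 0 = 1" using c0 by (simp add: h'def)
  have B: "h' d \<in> \<nat>" for d
  proof (cases "\<forall>j\<le>d. c j > 0")
    case True
    then have "c d > 0" by simp
    then have "c d \<in> \<nat>" unfolding c_def using hN
      by (cases "d < e") (auto intro: Nats_diff_pos)
    then show ?thesis using True by (simp add: h'def)
  qed (auto simp: h'def)
  have h'nn: "h' d \<ge> 0" for d using B[of d] by (auto elim!: Nats_cases)
  have "trunc_pos (Abs_fps h' * (1 - fps_X)) = trunc_pos (?P * (1 - fps_X ^ 1))"
    using F1[of 1 ?P] unfolding h'_def by simp
  also have "?P * (1 - fps_X ^ 1) = (Abs_fps h * (1 - fps_X)) * (1 - fps_X ^ e)"
    by (simp add: algebra_simps)
  also have "trunc_pos \<dots> = trunc_pos (Abs_fps (trunc_pos (Abs_fps h * (1 - fps_X))) * (1 - fps_X ^ e))"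
    using F1[of e "Abs_fps h * (1 - fps_X)"] Suc.prems(2) by simp
  finally have C: "fshape k (trunc_pos (Abs_fps h' * (1 - fps_X)))"
    using Suc.IH[OF gk Suc.prems(2)] by simp
  define g where "g = trunc_pos (Abs_fps h * (1 - fps_X))"
  have gdef: "g d = (if \<forall>j\<le>d. Dh h j > 0 then Dh h d else 0)" for d
    unfolding g_def trunc_pos_def nth_Dh ..
  have Dh0: "Dh h 0 = 1" using h0 by (simp add: Dh_def)
  have dc: "c d - c (d - 1) = Dh h d - (if d < e then 0 else Dh h (d - e))" if "d \<ge> 1" for d
    using that Suc.prems(2) unfolding c_def Dh_def
    by (cases "d < e"; cases "d = e") auto
  have D: "shp h'"
    unfolding shp_def
  proof (intro allI impI)
    fix d1 d2 assume a: "0 < d1 \<and> d1 \<le> d2 \<and> h' d1 \<le> h' (d1 - 1)"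
    show "h' d2 \<le> h' (d2 - 1)"
    proof (cases "\<forall>j\<le>d2. c j > 0")
      case False
      then have "h' d2 = 0" unfolding h'def by auto
      then show ?thesis using h'nn[of "d2 - 1"] by simp
    next
      case allpos: True
      then have eqc: "\<And>j. j \<le> d2 \<Longrightarrow> h' j = c j" by (auto simp: h'def)
      have c1: "c d1 \<le> c (d1 - 1)" using a eqc[of d1] eqc[of "d1 - 1"] by auto
      have goal: "c d2 \<le> c (d2 - 1)"
      proof (cases "\<forall>j. 1 \<le> j \<and> j \<le> d2 \<longrightarrow> Dh h j > 0")
        case True
        have gD: "\<And>j. j \<le> d2 \<Longrightarrow> g j = Dh h j"
        proof -
          fix j assume "j \<le> d2"
          have "\<forall>i\<le>j. Dh h i > 0"
          proof (intro allI impI)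
            fix i assume "i \<le> j"
            show "Dh h i > 0"
            proof (cases "i = 0")
              case True then show ?thesis using Dh0 by simp
            next
              case False then show ?thesis using True \<open>i \<le> j\<close> \<open>j \<le> d2\<close> by simp
            qed
          qed
          then show "g j = Dh h j" by (simp add: gdef)
        qed
        have w1: "g d1 - (if d1 < e then 0 else g (d1 - e)) \<le> 0"
          using dc[of d1] c1 a gD[of d1] gD[of "d1 - e"] by auto
        have "g d2 - (if d2 < e then 0 else g (d2 - e)) \<le> 0"
          using lemD[OF fshape_shp[OF gk[folded g_def]] fshape_nonneg[OF gk[folded g_def]] Suc.prems(2) _ _ w1] a by auto
        then show ?thesis using dc[of d2] a gD[of d2] gD[of "d2 - e"] by (cases "d2 < e") auto
      next
        case False
        define u where "u = (LEAST j. 1 \<le> j \<and> j \<le> d2 \<and> \<not> Dh h j > 0)"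
        have u: "1 \<le> u" "u \<le> d2" "\<not> Dh h u > 0"
          using False LeastI_ex[of "\<lambda>j. 1 \<le> j \<and> j \<le> d2 \<and> \<not> Dh h j > 0"]
          unfolding u_def by auto
        have umin: "\<And>j. j < u \<Longrightarrow> Dh h j > 0"
        proof -
          fix j assume "j < u"
          show "Dh h j > 0"
          proof (cases "j = 0")
            case True then show ?thesis using Dh0 by simp
          next
            case False
            then show ?thesis using not_less_Least[of j "\<lambda>j. 1 \<le> j \<and> j \<le> d2 \<and> \<not> Dh h j > 0"]
              \<open>j < u\<close> u unfolding u_def by auto
          qed
        qed
        have hu: "h u \<le> h (u - 1)" using u by (simp add: Dh_def)
        have ni: "\<And>a b. u - 1 \<le> b \<Longrightarrow> b \<le> a \<Longrightarrow> h a \<le> h b"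
          using shp_noninc[OF sh _ hu] u by auto
        show ?thesis
        proof (cases "\<not> d2 < e \<and> u \<le> d2 - e")
          case True
          then have "c d2 \<le> 0" using ni[of "d2 - e" d2] by (auto simp: c_def)
          then show ?thesis using allpos by auto
        next
          case False
          have "Dh h d2 \<le> 0" using ni[of "d2 - 1" d2] u by (auto simp: Dh_def)
          moreover have "d2 < e \<or> Dh h (d2 - e) > 0" using False umin by auto
          ultimately show ?thesis using dc[of d2] u by (cases "d2 < e") auto
        qed
      qed
      show ?thesis using goal eqc[of d2] eqc[of "d2 - 1"] by auto
    qed
  qed
  show ?case unfolding h'_def[symmetric] using A B C D by simp
qed


lemma inv_pow_step:
  "inverse ((1 - fps_X) ^ Suc n :: rat fps) * (1 - fps_X) = inverse ((1 - fps_X) ^ n)"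
proof -
  have A: "inverse ((1 - fps_X) ^ Suc n :: rat fps) = inverse (1 - fps_X) * inverse ((1 - fps_X) ^ n)"
    by (simp only: power_Suc fps_inverse_mult)
  have B: "inverse (1 - fps_X :: rat fps) * (1 - fps_X) = 1"
    by (rule inverse_mult_eq_1) simp
  have "inverse ((1 - fps_X) ^ Suc n :: rat fps) * (1 - fps_X) =
        (inverse ((1 - fps_X) ^ n) * inverse (1 - fps_X)) * (1 - fps_X)"
    unfolding A by (simp only: mult.commute)
  also have "\<dots> = inverse ((1 - fps_X) ^ n) * (inverse (1 - fps_X) * (1 - fps_X))"
    by (rule mult.assoc)
  finally show ?thesis unfolding B by simp
qed

lemma inv_pow_coeffs:
  "\<forall>d. fps_nth (inverse ((1 - fps_X) ^ n :: rat fps)) d \<in> \<nat> \<and>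
      (n \<ge> 1 \<longrightarrow> fps_nth (inverse ((1 - fps_X) ^ n :: rat fps)) d \<ge> 1)"
proof (induction n)
  case 0 then show ?case by simp
next
  case (Suc n)
  note IHn = Suc.IH
  let ?P = "inverse ((1 - fps_X) ^ Suc n :: rat fps)" and ?Q = "inverse ((1 - fps_X) ^ n :: rat fps)"
  have st: "fps_nth ?P d - (if d < 1 then 0 else fps_nth ?P (d - 1)) = fps_nth ?Q d" for d
    using nth_mult_1mXe[of ?P 1 d] inv_pow_step[of n] by simp
  have "fps_nth ?P d \<in> \<nat> \<and> fps_nth ?P d \<ge> 1" for d
  proof (induction d)
    case 0
    have "fps_nth ?P 0 = 1" by (simp add: startsby_one_power)
    then show ?case by simp
  next
    case (Suc d)
    have "fps_nth ?P (Suc d) = fps_nth ?P d + fps_nth ?Q (Suc d)" using st[of "Suc d"] by simp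
    moreover have qn: "fps_nth ?Q (Suc d) \<in> \<nat>" using IHn by blast
    moreover have "fps_nth ?Q (Suc d) \<ge> 0" using qn by (auto elim!: Nats_cases)
    ultimately show ?case using Suc.IH by auto
  qed
  then show ?case by simp
qed

lemma fshape_base: "fshape n (trunc_pos (inverse ((1 - fps_X) ^ n)))"
proof (induction n)
  case 0
  have "trunc_pos (inverse ((1 - fps_X) ^ 0)) = (\<lambda>d. if d = 0 then 1 else 0)"
  proof
    fix d show "trunc_pos (inverse ((1 - fps_X) ^ 0)) d = (if d = 0 then 1 else 0)"
      by (cases d) (auto simp: trunc_pos_def)
  qed
  then show ?case by simp
next
  case (Suc n)
  let ?P = "inverse ((1 - fps_X) ^ Suc n :: rat fps)" and ?Q = "inverse ((1 - fps_X) ^ n :: rat fps)"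
  have cP: "\<And>d. fps_nth ?P d \<in> \<nat> \<and> fps_nth ?P d \<ge> 1" using inv_pow_coeffs[of "Suc n"] by simp
  have tP: "trunc_pos ?P = fps_nth ?P"
    using cP unfolding trunc_pos_def by (intro ext) (auto intro: less_le_trans[OF zero_less_one])
  have st: "fps_nth ?P d - (if d = 0 then 0 else fps_nth ?P (d - 1)) = fps_nth ?Q d" for d
    using nth_mult_1mXe[of ?P 1 d] inv_pow_step[of n] by simp
  have sh: "shp (fps_nth ?P)"
    unfolding shp_def
  proof (intro allI impI)
    fix d1 d2 assume a: "0 < d1 \<and> d1 \<le> d2 \<and> fps_nth ?P d1 \<le> fps_nth ?P (d1 - 1)"
    show "fps_nth ?P d2 \<le> fps_nth ?P (d2 - 1)"
    proof (cases n)
      case 0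
      then show ?thesis using st[of d2] a by auto
    next
      case (Suc m)
      then have "fps_nth ?Q d1 \<ge> 1" using inv_pow_coeffs[of n] by auto
      then show ?thesis using st[of d1] a by auto
    qed
  qed
  have "fps_nth ?P 0 = 1" using startsby_one_power[of "1 - fps_X :: rat fps" "Suc n"] by simp
  moreover have "Abs_fps (trunc_pos ?P) * (1 - fps_X) = ?Q"
    using tP inv_pow_step[of n] by (simp add: fps_nth_inverse)
  ultimately show ?case using cP sh Suc.IH tP by simp
qed

lemma froberg_Cons: "froberg_series n (e # ds) = froberg_series n ds * (1 - fps_X ^ e)"
proof -
  have "(\<Prod>j<length (e # ds). (1 - fps_X ^ ((e # ds) ! j) :: rat fps)) =
        (1 - fps_X ^ e) * (\<Prod>j<length ds. 1 - fps_X ^ (ds ! j))"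
    by (simp only: length_Cons prod.lessThan_Suc_shift nth_Cons_0 nth_Cons_Suc)
  then show ?thesis unfolding froberg_series_def by (simp only:) (simp add: algebra_simps)
qed

lemma fshape_froberg:
  assumes "\<forall>d\<in>set ds. d > 0"
  shows "fshape n (froberg n ds)"
  using assms
proof (induction ds)
  case Nil
  then show ?case using fshape_base[of n] by (simp add: froberg_def froberg_series_def)
next
  case (Cons e ds)
  have "froberg n (e # ds) = trunc_pos (Abs_fps (froberg n ds) * (1 - fps_X ^ e))"
    unfolding froberg_def froberg_Cons using F1[of e "froberg_series n ds"] Cons.prems by simp
  then show ?case using closure[of n "froberg n ds" e] Cons by simp
qed

lemma fshape_0_1: "fshape 0 h \<Longrightarrow> fshape 1 h"
proof -
  assume "fshape 0 h"
  then have h: "h = (\<lambda>d. if d = 0 then 1 else 0)" by simp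
  have "trunc_pos (Abs_fps h * (1 - fps_X)) = h"
  proof
    fix d show "trunc_pos (Abs_fps h * (1 - fps_X)) d = h d"
    proof (cases d)
      case 0 then show ?thesis using h by (simp add: trunc_pos_def nth_Dh Dh_def)
    next
      case (Suc d')
      have "\<not> fps_nth (Abs_fps h * (1 - fps_X)) 1 > 0" using h by (simp add: nth_Dh Dh_def)
      then show ?thesis using Suc h unfolding trunc_pos_def by auto
    qed
  qed
  moreover have "shp h" using h by (auto simp: shp_def)
  ultimately show "fshape 1 h" using h by simp
qed



lemma mdeg_upd_dec:
  assumes "i < l" "a i > 0"
  shows "mdeg l (a(i := a i - 1)) = mdeg l a - 1" "mdeg l a > 0"
proof -
  have "mdeg l a = a i + (\<Sum>j\<in>{..<l} - {i}. a j)"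
    unfolding mdeg_def using assms by (simp add: sum.remove)
  moreover have "mdeg l (a(i := a i - 1)) = (a i - 1) + (\<Sum>j\<in>{..<l} - {i}. a j)"
    unfolding mdeg_def using assms by (simp add: sum.remove)
  ultimately show "mdeg l (a(i := a i - 1)) = mdeg l a - 1" "mdeg l a > 0" using assms by auto
qed

lemma mdeg_upd:
  assumes "i < l"
  shows "mdeg l (a(i := x)) + a i = mdeg l a + x"
proof -
  have "mdeg l a = a i + (\<Sum>j\<in>{..<l} - {i}. a j)"
    unfolding mdeg_def using assms by (simp add: sum.remove)
  moreover have "mdeg l (a(i := x)) = x + (\<Sum>j\<in>{..<l} - {i}. a j)"
    unfolding mdeg_def using assms by (simp add: sum.remove)
  ultimately show ?thesis by simp
qed

lemma monomials_upd: "a \<in> monomials l \<Longrightarrow> i < l \<Longrightarrow> a(i := x) \<in> monomials l"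
  unfolding monomials_def by auto

lemma monomials_Suc_k0: "a \<in> monomials (Suc k) \<Longrightarrow> a(k := 0) \<in> monomials k"
  unfolding monomials_def by (auto simp: less_Suc_eq_le)

lemma monomials_mono: "a \<in> monomials k \<Longrightarrow> a \<in> monomials (Suc k)"
  unfolding monomials_def by auto

lemma mdeg_Suc: "mdeg (Suc k) a = mdeg k a + a k"
  unfolding mdeg_def by simp

lemma mdeg_k0: "a \<in> monomials k \<Longrightarrow> mdeg (Suc k) a = mdeg k a"
  unfolding monomials_def by (simp add: mdeg_Suc)

lemma mdeg_pos_ex: "a \<in> monomials l \<Longrightarrow> mdeg l a > 0 \<Longrightarrow> \<exists>i<l. a i > 0"
  unfolding mdeg_def by (metis lessThan_iff neq0_conv sum.neutral)

lemma finite_deg: "finite {a \<in> monomials l. mdeg l a = d}"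
proof -
  have "{a \<in> monomials l. mdeg l a = d} \<subseteq> (\<lambda>f i. if i < l then f i else 0) ` ({..<l} \<rightarrow>\<^sub>E {..d})"
  proof
    fix a assume a: "a \<in> {a \<in> monomials l. mdeg l a = d}"
    have le: "a i \<le> d" if "i < l" for i
    proof -
      have "a i \<le> (\<Sum>j<l. a j)" using that by (intro member_le_sum) auto
      then show ?thesis using a unfolding mdeg_def by simp
    qed
    let ?f = "restrict a {..<l}"
    have "?f \<in> {..<l} \<rightarrow>\<^sub>E {..d}" using le by auto
    moreover have "a = (\<lambda>i. if i < l then ?f i else 0)"
      using a unfolding monomials_def by (auto simp: fun_eq_iff)
    ultimately show "a \<in> (\<lambda>f i. if i < l then f i else 0) ` ({..<l} \<rightarrow>\<^sub>E {..d})" by blast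
  qed
  moreover have "finite ({..<l} \<rightarrow>\<^sub>E {..d::nat})" by (intro finite_PiE) auto
  ultimately show ?thesis using finite_subset by blast
qed

lemma divisor_closed_step:
  assumes S: "S \<subseteq> monomials l"
    and st: "\<And>a i. a \<in> S \<Longrightarrow> i < l \<Longrightarrow> a i > 0 \<Longrightarrow> a(i := a i - 1) \<in> S"
  shows "a \<in> S \<Longrightarrow> b \<in> monomials l \<Longrightarrow> mdvd b a \<Longrightarrow> b \<in> S"
proof (induction "mdeg l a" arbitrary: a rule: less_induct)
  case less
  show ?case
  proof (cases "b = a")
    case True then show ?thesis using less by simp
  next
    case False
    then obtain i where "b i \<noteq> a i" by auto
    then have bi: "b i < a i" using less.prems(3) unfolding mdvd_def by (metis le_neq_implies_less)
    have il: "i < l"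
    proof (rule ccontr)
      assume "\<not> i < l"
      then have "a i = 0" using less.prems(1) S unfolding monomials_def by auto
      then show False using bi by simp
    qed
    let ?a = "a(i := a i - 1)"
    have "?a \<in> S" using st[OF less.prems(1) il] bi by simp
    moreover have "mdeg l ?a < mdeg l a" using mdeg_upd_dec[OF il, of a] bi by simp
    moreover have "mdvd b ?a" using less.prems(3) bi unfolding mdvd_def by auto
    ultimately show ?thesis using less.hyps less.prems(2) by blast
  qed
qed

lemma monomial_ideal_compl:
  assumes S: "S \<subseteq> monomials l"
    and st: "\<And>a i. a \<in> S \<Longrightarrow> i < l \<Longrightarrow> a i > 0 \<Longrightarrow> a(i := a i - 1) \<in> S"
  shows "monomial_ideal l (monomials l - S)"
  unfolding monomial_ideal_def
  using divisor_closed_step[OF S st] by blast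

lemma ideal_divisor_closed:
  assumes "monomial_ideal l K" "a \<in> monomials l - K" "b \<in> monomials l" "mdvd b a"
  shows "b \<in> monomials l - K"
  using assms unfolding monomial_ideal_def by blast

lemma hilb_quot_compl:
  assumes "S \<subseteq> monomials l"
  shows "hilb_quot l (monomials l - S) d = card {a \<in> S. mdeg l a = d}"
proof -
  have "{a \<in> monomials l. mdeg l a = d \<and> a \<notin> monomials l - S} = {a \<in> S. mdeg l a = d}"
    using assms by auto
  then show ?thesis unfolding hilb_quot_def by simp
qed

lemma R1:
  assumes "mdeg (Suc k) a = mdeg (Suc k) b" "a k < b k"
  shows "revlex_gt (Suc k) a b"
  unfolding revlex_gt_def using assms by (intro disjI2) (auto intro!: exI[of _ k])

lemma R2:
  assumes "a \<in> monomials k" "b \<in> monomials k"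
  shows "revlex_gt (Suc k) a b \<longleftrightarrow> revlex_gt k a b"
proof -
  have ak: "a k = 0" "b k = 0" using assms unfolding monomials_def by auto
  have "(\<exists>s<Suc k. a s \<noteq> b s \<and> (\<forall>t. s < t \<and> t < Suc k \<longrightarrow> a t = b t) \<and> a s < b s) \<longleftrightarrow>
        (\<exists>s<k. a s \<noteq> b s \<and> (\<forall>t. s < t \<and> t < k \<longrightarrow> a t = b t) \<and> a s < b s)"
  proof
    assume "\<exists>s<Suc k. a s \<noteq> b s \<and> (\<forall>t. s < t \<and> t < Suc k \<longrightarrow> a t = b t) \<and> a s < b s"
    then obtain s where s: "s < Suc k" "a s \<noteq> b s" "\<forall>t. s < t \<and> t < Suc k \<longrightarrow> a t = b t" "a s < b s" by blast
    then have "s \<noteq> k" using ak by auto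
    then show "\<exists>s<k. a s \<noteq> b s \<and> (\<forall>t. s < t \<and> t < k \<longrightarrow> a t = b t) \<and> a s < b s"
      using s by (intro exI[of _ s]) auto
  next
    assume "\<exists>s<k. a s \<noteq> b s \<and> (\<forall>t. s < t \<and> t < k \<longrightarrow> a t = b t) \<and> a s < b s"
    then obtain s where s: "s < k" "a s \<noteq> b s" "\<forall>t. s < t \<and> t < k \<longrightarrow> a t = b t" "a s < b s" by blast
    then show "\<exists>s<Suc k. a s \<noteq> b s \<and> (\<forall>t. s < t \<and> t < Suc k \<longrightarrow> a t = b t) \<and> a s < b s"
      using ak by (intro exI[of _ s]) (auto simp: less_Suc_eq)
  qed
  then show ?thesis unfolding revlex_gt_def using mdeg_k0[OF assms(1)] mdeg_k0[OF assms(2)] by simp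
qed

lemma R3:
  "revlex_gt (Suc k) (a(k := a k + c)) (b(k := b k + c)) \<longleftrightarrow> revlex_gt (Suc k) a b"
proof -
  have d: "mdeg (Suc k) (a(k := a k + c)) = mdeg (Suc k) a + c" for a
    using mdeg_upd[of k "Suc k" a "a k + c"] by simp
  have "(\<exists>s<Suc k. (a(k := a k + c)) s \<noteq> (b(k := b k + c)) s \<and>
          (\<forall>t. s < t \<and> t < Suc k \<longrightarrow> (a(k := a k + c)) t = (b(k := b k + c)) t) \<and>
          (a(k := a k + c)) s < (b(k := b k + c)) s) \<longleftrightarrow>
        (\<exists>s<Suc k. a s \<noteq> b s \<and> (\<forall>t. s < t \<and> t < Suc k \<longrightarrow> a t = b t) \<and> a s < b s)"
    by (intro ex_cong1) auto
  then show ?thesis unfolding revlex_gt_def d by simp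
qed

lemma revlex_irrefl: "\<not> revlex_gt l a a"
  unfolding revlex_gt_def by auto

lemma revlex_trans:
  assumes "revlex_gt l a b" "revlex_gt l b c"
  shows "revlex_gt l a c"
proof (cases "mdeg l a = mdeg l b \<and> mdeg l b = mdeg l c")
  case False
  then show ?thesis using assms unfolding revlex_gt_def by auto
next
  case True
  obtain s1 where s1: "s1 < l" "a s1 \<noteq> b s1" "\<forall>t. s1 < t \<and> t < l \<longrightarrow> a t = b t" "a s1 < b s1"
    using assms(1) True unfolding revlex_gt_def by auto
  obtain s2 where s2: "s2 < l" "b s2 \<noteq> c s2" "\<forall>t. s2 < t \<and> t < l \<longrightarrow> b t = c t" "b s2 < c s2"
    using assms(2) True unfolding revlex_gt_def by auto
  have "\<exists>s<l. a s \<noteq> c s \<and> (\<forall>t. s < t \<and> t < l \<longrightarrow> a t = c t) \<and> a s < c s"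
  proof (cases s1 s2 rule: linorder_cases)
    case less
    then show ?thesis using s1 s2 by (intro exI[of _ s2]) auto
  next
    case equal
    then show ?thesis using s1 s2 by (intro exI[of _ s2]) auto
  next
    case greater
    then show ?thesis using s1 s2 by (intro exI[of _ s1]) auto
  qed
  then show ?thesis using True unfolding revlex_gt_def by auto
qed

lemma revlex_asym: "revlex_gt l a b \<Longrightarrow> \<not> revlex_gt l b a"
  using revlex_trans revlex_irrefl by blast

lemma revlex_total:
  assumes "a \<in> monomials l" "b \<in> monomials l" "a \<noteq> b" "mdeg l a = mdeg l b"
  shows "revlex_gt l a b \<or> revlex_gt l b a"
proof -
  let ?D = "{s. a s \<noteq> b s}"
  have fin: "?D \<subseteq> {..<l}" using assms(1,2) unfolding monomials_def
    by (auto simp: subset_eq) (metis not_less)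
  then have "finite ?D" using finite_subset by blast
  moreover have "?D \<noteq> {}" using assms(3) by auto
  ultimately have m: "Max ?D \<in> ?D" "\<And>t. t \<in> ?D \<Longrightarrow> t \<le> Max ?D"
    using Max_in Max_ge by blast+
  have ml: "Max ?D < l" using m fin by auto
  have above: "\<forall>t. Max ?D < t \<and> t < l \<longrightarrow> a t = b t" using m(2) by (auto simp: not_le[symmetric])
  show ?thesis
  proof (cases "a (Max ?D) < b (Max ?D)")
    case True
    have "\<exists>s<l. a s \<noteq> b s \<and> (\<forall>t. s < t \<and> t < l \<longrightarrow> a t = b t) \<and> a s < b s"
      using ml above m(1) True by blast
    then show ?thesis unfolding revlex_gt_def using assms(4) by blast
  next
    case False
    then have "b (Max ?D) < a (Max ?D)" using m(1) by auto
    have above': "\<forall>t. Max ?D < t \<and> t < l \<longrightarrow> b t = a t"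
    proof (intro allI impI)
      fix t assume "Max ?D < t \<and> t < l"
      then have "\<not> t \<le> Max ?D" by simp
      then have "t \<notin> ?D" using m(2) by blast
      then show "b t = a t" by simp
    qed
    have "Max ?D < l \<and> b (Max ?D) \<noteq> a (Max ?D) \<and> (\<forall>t. Max ?D < t \<and> t < l \<longrightarrow> b t = a t) \<and> b (Max ?D) < a (Max ?D)"
      using ml above' \<open>b (Max ?D) < a (Max ?D)\<close> less_imp_neq by blast
    then have "\<exists>s<l. b s \<noteq> a s \<and> (\<forall>t. s < t \<and> t < l \<longrightarrow> b t = a t) \<and> b s < a s"
      by blast
    then show ?thesis unfolding revlex_gt_def using assms(4) by auto
  qed
qed


locale slo =
  fixes T :: "'a set" and r :: "'a \<Rightarrow> 'a \<Rightarrow> bool"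
  assumes fin: "finite T"
    and irr: "\<And>x. x \<in> T \<Longrightarrow> \<not> r x x"
    and tr: "\<And>x y z. x \<in> T \<Longrightarrow> y \<in> T \<Longrightarrow> z \<in> T \<Longrightarrow> r x y \<Longrightarrow> r y z \<Longrightarrow> r x z"
    and tot: "\<And>x y. x \<in> T \<Longrightarrow> y \<in> T \<Longrightarrow> x \<noteq> y \<Longrightarrow> r x y \<or> r y x"
begin

definition rk :: "'a \<Rightarrow> nat" where "rk b = card {c \<in> T. r b c}"

lemma rk_less: assumes "x \<in> T" "y \<in> T" "r x y" shows "rk y < rk x"
proof -
  have "{c \<in> T. r y c} \<subset> {c \<in> T. r x c}"
    using assms tr irr by blast
  then show ?thesis unfolding rk_def by (intro psubset_card_mono) (auto intro: finite_subset[OF _ fin])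
qed

lemma rk_inj: "inj_on rk T"
  unfolding inj_on_def using rk_less tot by (metis less_irrefl)

lemma rk_bound: assumes "x \<in> T" shows "rk x < card T"
proof -
  have "{c \<in> T. r x c} \<subset> T" using assms irr by blast
  then show ?thesis unfolding rk_def using fin by (intro psubset_card_mono) auto
qed

lemma rk_image: "rk ` T = {..<card T}"
proof -
  have "rk ` T \<subseteq> {..<card T}" using rk_bound by auto
  moreover have "card (rk ` T) = card {..<card T}" using card_image[OF rk_inj] by simp
  ultimately show ?thesis by (intro card_subset_eq) auto
qed

lemma card_bot: "card {b \<in> T. rk b < N} = min N (card T)"
proof -
  have "card {b \<in> T. rk b < N} = card (rk ` {b \<in> T. rk b < N})"
    by (rule card_image[symmetric]) (rule inj_on_subset[OF rk_inj]; auto)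
  also have "rk ` {b \<in> T. rk b < N} = {x \<in> rk ` T. x < N}" by auto
  also have "\<dots> = {..<min N (card T)}" unfolding rk_image by auto
  finally show ?thesis by simp
qed

end



lemma telescope: "h d = (\<Sum>i\<le>d. Dh h i)"
  by (induction d) (auto simp: Dh_def)

locale stepctx =
  fixes h :: "nat \<Rightarrow> rat" and k :: nat and K0 :: "(nat \<Rightarrow> nat) set"
  assumes h0: "h 0 = 1" and hN: "\<And>d. h d \<in> \<nat>" and sh: "shp h"
    and K0i: "monomial_ideal k K0" and K0a: "almost_revlex k K0"
    and cnt0: "\<And>d. of_nat (hilb_quot k K0 d) = trunc_pos (Abs_fps h * (1 - fps_X)) d"
begin

definition S0 where "S0 = monomials k - K0"
definition inc where "inc d = (\<forall>j. 1 \<le> j \<and> j \<le> d \<longrightarrow> Dh h j > 0)"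
definition S1 where "S1 = {a \<in> monomials (Suc k). inc (mdeg (Suc k) a) \<and> a(k := 0) \<in> S0}"
definition u where "u = (LEAST d. \<not> inc d)"
definition T where "T = {b \<in> S1. mdeg (Suc k) b = u - 1}"
definition rank where "rank b = card {c \<in> T. revlex_gt (Suc k) b c}"
definition S2 where "S2 = {a \<in> monomials (Suc k). \<not> inc (mdeg (Suc k) a) \<and>
   mdeg (Suc k) a - u + 1 \<le> a k \<and> a(k := a k - (mdeg (Suc k) a - u + 1)) \<in> T \<and>
   of_nat (rank (a(k := a k - (mdeg (Suc k) a - u + 1)))) < h (mdeg (Suc k) a)}"
definition S where "S = S1 \<union> S2"

lemma Dh0: "Dh h 0 = 1" using h0 by (simp add: Dh_def)

lemma inc_mono: "inc d \<Longrightarrow> d' \<le> d \<Longrightarrow> inc d'"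
  unfolding inc_def by auto

lemma inc_all: "inc d \<Longrightarrow> j \<le> d \<Longrightarrow> Dh h j > 0"
  unfolding inc_def using Dh0 by (cases j) auto

lemma notinc:
  assumes "\<not> inc d"
  shows "1 \<le> u" "u \<le> d" "inc (u - 1)" "\<And>d'. inc d' \<longleftrightarrow> d' < u" "Dh h u \<le> 0"
proof -
  have nu: "\<not> inc u" using assms LeastI[of "\<lambda>d. \<not> inc d"] unfolding u_def by blast
  show ud: "u \<le> d" using assms Least_le[of "\<lambda>d. \<not> inc d"] unfolding u_def by blast
  have lt: "\<And>d'. d' < u \<Longrightarrow> inc d'" using not_less_Least[of _ "\<lambda>d. \<not> inc d"] unfolding u_def by blast
  show "1 \<le> u" using nu unfolding inc_def by (cases u) auto
  then show "inc (u - 1)" using lt by simp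
  show "\<And>d'. inc d' \<longleftrightarrow> d' < u" using lt nu inc_mono by (meson not_less)
  show "Dh h u \<le> 0"
  proof -
    obtain j where j: "1 \<le> j" "j \<le> u" "\<not> Dh h j > 0" using nu unfolding inc_def by auto
    have "j = u"
    proof (rule ccontr)
      assume "j \<noteq> u"
      then have "inc (u - 1)" using lt \<open>1 \<le> u\<close> by simp
      then show False using j \<open>j \<noteq> u\<close> unfolding inc_def by auto
    qed
    then show ?thesis using j by simp
  qed
qed

lemma noninc:
  assumes "\<not> inc d" "u - 1 \<le> b" "b \<le> a"
  shows "h a \<le> h b"
proof -
  have "h u \<le> h (u - 1)" using notinc(5)[OF assms(1)] notinc(1)[OF assms(1)] by (simp add: Dh_def)
  then show ?thesis using shp_noninc[OF sh _ _ assms(2,3)] notinc(1)[OF assms(1)] by simp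
qed

lemma S0_sub: "S0 \<subseteq> monomials k" unfolding S0_def by auto

lemma S0_div: "a \<in> S0 \<Longrightarrow> b \<in> monomials k \<Longrightarrow> mdvd b a \<Longrightarrow> b \<in> S0"
  unfolding S0_def using ideal_divisor_closed[OF K0i] by blast

lemma S0_card: "of_nat (card {m \<in> S0. mdeg k m = i}) = trunc_pos (Abs_fps h * (1 - fps_X)) i"
proof -
  have "hilb_quot k K0 i = card {m \<in> S0. mdeg k m = i}"
    unfolding hilb_quot_def S0_def by (rule arg_cong[where f=card]) auto
  then show ?thesis using cnt0[of i] by simp
qed

lemma g_inc: "inc d \<Longrightarrow> i \<le> d \<Longrightarrow> trunc_pos (Abs_fps h * (1 - fps_X)) i = Dh h i"
  unfolding trunc_pos_def nth_Dh using inc_all inc_mono by auto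

lemma S_sub: "S \<subseteq> monomials (Suc k)" unfolding S_def S1_def S2_def by auto

lemma count_inc:
  assumes "inc d"
  shows "of_nat (card {a \<in> S. mdeg (Suc k) a = d}) = h d"
proof -
  have eq: "{a \<in> S. mdeg (Suc k) a = d} =
     (\<Union>i\<in>{..d}. (\<lambda>m. m(k := d - i)) ` {m \<in> S0. mdeg k m = i})" (is "?L = ?R")
  proof
    show "?L \<subseteq> ?R"
    proof
      fix a assume a: "a \<in> ?L"
      then have a1: "a \<in> S1" using assms unfolding S_def S2_def by auto
      let ?m = "a(k := 0)"
      have m: "?m \<in> S0" using a1 unfolding S1_def by auto
      have am: "a \<in> monomials (Suc k)" using a1 unfolding S1_def by auto
      have dm: "mdeg k ?m + a k = d"
        using a mdeg_upd[of k "Suc k" a 0] mdeg_k0[OF monomials_Suc_k0[OF am]] by auto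
      have "a = ?m(k := d - mdeg k ?m)" using dm by auto
      have "a \<in> (\<lambda>m. m(k := d - mdeg k ?m)) ` {m \<in> S0. mdeg k m = mdeg k ?m}"
        by (rule image_eqI[where x="?m"]) (use \<open>a = ?m(k := d - mdeg k ?m)\<close> m in simp_all)
      then show "a \<in> ?R" using dm by (intro UN_I[of "mdeg k ?m"]) auto
    qed
  next
    show "?R \<subseteq> ?L"
    proof
      fix a assume "a \<in> ?R"
      then obtain i m where im: "i \<le> d" "m \<in> S0" "mdeg k m = i" "a = m(k := d - i)" by auto
      have mm: "m \<in> monomials k" using im S0_sub by auto
      then have mk: "m k = 0" unfolding monomials_def by auto
      have am: "a \<in> monomials (Suc k)" using im monomials_upd[OF monomials_mono[OF mm], of k] by simp
      have "mdeg (Suc k) a = d"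
        using mdeg_upd[of k "Suc k" m "d - i"] im mk mdeg_k0[OF mm] by simp
      moreover have "a(k := 0) = m" using im mk by auto
      ultimately show "a \<in> ?L" using am im assms unfolding S_def S1_def by auto
    qed
  qed
  have fin: "finite {m \<in> S0. mdeg k m = i}" for i
    by (rule finite_subset[OF _ finite_deg[of k i]]) (use S0_sub in auto)
  have inj: "inj_on (\<lambda>m. m(k := d - i)) {m \<in> S0. mdeg k m = i}" for i
  proof (rule inj_onI)
    fix x y assume xy: "x \<in> {m \<in> S0. mdeg k m = i}" "y \<in> {m \<in> S0. mdeg k m = i}" "x(k := d - i) = y(k := d - i)"
    have "x k = 0" "y k = 0" using xy S0_sub unfolding monomials_def by auto
    then show "x = y" using xy(3) by (auto simp: fun_eq_iff) (metis fun_upd_apply)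
  qed
  have disj: "\<forall>i\<in>{..d}. \<forall>j\<in>{..d}. i \<noteq> j \<longrightarrow>
      (\<lambda>m. m(k := d - i)) ` {m \<in> S0. mdeg k m = i} \<inter> (\<lambda>m. m(k := d - j)) ` {m \<in> S0. mdeg k m = j} = {}"
    by auto (metis fun_upd_same diff_diff_cancel)
  have "card ?L = (\<Sum>i\<le>d. card ((\<lambda>m. m(k := d - i)) ` {m \<in> S0. mdeg k m = i}))"
    unfolding eq by (rule card_UN_disjoint) (use fin disj in auto)
  also have "\<dots> = (\<Sum>i\<le>d. card {m \<in> S0. mdeg k m = i})"
    using card_image[OF inj] by simp
  finally have "of_nat (card ?L) = (\<Sum>i\<le>d. (of_nat (card {m \<in> S0. mdeg k m = i}) :: rat))" by simp
  also have "\<dots> = (\<Sum>i\<le>d. Dh h i)" using S0_card g_inc[OF assms] by simp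
  finally show ?thesis using telescope[of h d] by simp
qed

lemma T_sub: "T \<subseteq> monomials (Suc k)" unfolding T_def S1_def by auto

lemma T_deg: "b \<in> T \<Longrightarrow> mdeg (Suc k) b = u - 1" unfolding T_def by auto

lemma T_fin: "finite T"
  by (rule finite_subset[OF _ finite_deg[of "Suc k" "u - 1"]]) (use T_sub T_deg in auto)

lemma T_slo: "slo T (revlex_gt (Suc k))"
proof
  show "finite T" by (rule T_fin)
  show "\<And>x. x \<in> T \<Longrightarrow> \<not> revlex_gt (Suc k) x x" by (rule revlex_irrefl)
  show "\<And>x y z. revlex_gt (Suc k) x y \<Longrightarrow> revlex_gt (Suc k) y z \<Longrightarrow> revlex_gt (Suc k) x z"
    by (rule revlex_trans)
  show "\<And>x y. x \<in> T \<Longrightarrow> y \<in> T \<Longrightarrow> x \<noteq> y \<Longrightarrow> revlex_gt (Suc k) x y \<or> revlex_gt (Suc k) y x"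
    using revlex_total T_sub T_deg by (metis subsetD)
qed

lemma rank_eq: "rank = slo.rk T (revlex_gt (Suc k))"
  unfolding rank_def slo.rk_def[OF T_slo] by (rule ext) simp

lemma rank_less: "x \<in> T \<Longrightarrow> y \<in> T \<Longrightarrow> revlex_gt (Suc k) x y \<Longrightarrow> rank y < rank x"
  unfolding rank_eq by (rule slo.rk_less[OF T_slo])

lemma card_T: "\<not> inc d \<Longrightarrow> of_nat (card T) = h (u - 1)"
proof -
  assume "\<not> inc d"
  then have iu: "inc (u - 1)" by (rule notinc(3))
  have "T = {a \<in> S. mdeg (Suc k) a = u - 1}"
    unfolding T_def S_def S2_def using iu by auto
  then show ?thesis using count_inc[OF iu] by simp
qed

lemma shift_mdeg: "mdeg (Suc k) (b(k := b k + e)) = mdeg (Suc k) b + e"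
  using mdeg_upd[of k "Suc k" b "b k + e"] by simp

lemma count_notinc:
  assumes ni: "\<not> inc d"
  shows "of_nat (card {a \<in> S. mdeg (Suc k) a = d}) = h d"
proof -
  define e where "e = d - u + 1"
  have u1: "1 \<le> u" "u \<le> d" using notinc[OF ni] by auto
  obtain Hd where Hd: "h d = of_nat Hd" using hN[of d] by (auto elim!: Nats_cases)
  have eq: "{a \<in> S. mdeg (Suc k) a = d} = (\<lambda>b. b(k := b k + e)) ` {b \<in> T. rank b < Hd}"
    (is "?L = ?R")
  proof
    show "?L \<subseteq> ?R"
    proof
      fix a assume a: "a \<in> ?L"
      then have a2: "a \<in> S2" using ni unfolding S_def S1_def by auto
      let ?b = "a(k := a k - e)"
      have b: "?b \<in> T" "of_nat (rank ?b) < h d" "e \<le> a k"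
        using a2 a unfolding S2_def e_def by auto
      have "a = ?b(k := ?b k + e)" using b(3) by auto
      moreover have "?b \<in> {b \<in> T. rank b < Hd}" using b Hd by simp
      ultimately show "a \<in> ?R" by (rule image_eqI)
    qed
  next
    show "?R \<subseteq> ?L"
    proof
      fix a assume "a \<in> ?R"
      then obtain b where b: "b \<in> T" "rank b < Hd" "a = b(k := b k + e)" by auto
      have bm: "b \<in> monomials (Suc k)" using b T_sub by auto
      have am: "a \<in> monomials (Suc k)" using b monomials_upd[OF bm, of k] by simp
      have ad: "mdeg (Suc k) a = d" using b(3) shift_mdeg[of b e] T_deg[OF b(1)] u1 unfolding e_def by simp
      have "a(k := a k - e) = b" using b by auto
      then have "a \<in> S2" unfolding S2_def using am ad ni b Hd unfolding e_def by auto
      then show "a \<in> ?L" unfolding S_def using ad by auto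
    qed
  qed
  have inj: "inj_on (\<lambda>b. b(k := b k + e)) X" for X
    by (rule inj_onI) (metis add_right_cancel fun_upd_eqD fun_upd_idem_iff fun_upd_upd)
  have "card ?L = card {b \<in> T. rank b < Hd}" unfolding eq by (rule card_image[OF inj])
  also have "\<dots> = min Hd (card T)" unfolding rank_eq by (rule slo.card_bot[OF T_slo])
  also have "\<dots> = Hd"
  proof -
    have "h d \<le> h (u - 1)" using noninc[OF ni, of "u - 1" d] u1 by simp
    then have "Hd \<le> card T" using card_T[OF ni] Hd by simp
    then show ?thesis by simp
  qed
  finally show ?thesis using Hd by simp
qed

lemma count: "of_nat (hilb_quot (Suc k) (monomials (Suc k) - S) d) = h d"
  using hilb_quot_compl[OF S_sub] count_inc count_notinc by (cases "inc d") auto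

lemma S1_sub_S: "S1 \<subseteq> S" unfolding S_def by auto
lemma T_sub_S: "T \<subseteq> S" unfolding T_def S_def by auto

lemma S2_elim:
  assumes "a \<in> S2"
  shows "a \<in> monomials (Suc k)" "\<not> inc (mdeg (Suc k) a)" "mdeg (Suc k) a - u + 1 \<le> a k"
    "a(k := a k - (mdeg (Suc k) a - u + 1)) \<in> T"
    "of_nat (rank (a(k := a k - (mdeg (Suc k) a - u + 1)))) < h (mdeg (Suc k) a)"
  using assms unfolding S2_def by auto

lemma S2_intro:
  assumes "a \<in> monomials (Suc k)" "mdeg (Suc k) a = d" "\<not> inc d" "d - u + 1 \<le> a k"
    "a(k := a k - (d - u + 1)) = b" "b \<in> T" "of_nat (rank b) < h d"
  shows "a \<in> S2"
  using assms unfolding S2_def by auto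

lemma T_intro:
  assumes "b \<in> monomials (Suc k)" "mdeg (Suc k) b = u - 1" "inc (u - 1)" "b(k := 0) \<in> S0"
  shows "b \<in> T"
  using assms unfolding T_def S1_def by auto

lemma S_div_step:
  assumes a: "a \<in> S" and i: "i < Suc k" "a i > 0"
  shows "a(i := a i - 1) \<in> S"
proof -
  let ?a = "a(i := a i - 1)"
  define d where "d = mdeg (Suc k) a"
  have am: "a \<in> monomials (Suc k)" using a S_sub by auto
  have am': "?a \<in> monomials (Suc k)" using monomials_upd[OF am i(1)] .
  have dd: "mdeg (Suc k) ?a = d - 1" "d > 0" using mdeg_upd_dec[of i "Suc k" a] i unfolding d_def by auto
  show ?thesis
  proof (cases "a \<in> S1")
    case True
    then have inc: "inc d" "a(k := 0) \<in> S0" unfolding S1_def d_def by auto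
    have "?a(k := 0) \<in> S0"
    proof (cases "i = k")
      case True
      then have "?a(k := 0) = a(k := 0)" by (auto simp: fun_eq_iff)
      then show ?thesis using inc by simp
    next
      case False
      then have ik: "i < k" using i by simp
      have "?a(k := 0) = (a(k := 0))(i := a i - 1)" using False by (auto simp: fun_eq_iff)
      moreover have "(a(k := 0))(i := a i - 1) \<in> monomials k"
        using monomials_upd[OF monomials_Suc_k0[OF am] ik] by simp
      moreover have "mdvd ((a(k := 0))(i := a i - 1)) (a(k := 0))" unfolding mdvd_def using False by auto
      ultimately show ?thesis using S0_div[OF inc(2)] by simp
    qed
    moreover have "inc (mdeg (Suc k) ?a)" using inc(1) dd inc_mono by simp
    ultimately have "?a \<in> S1" unfolding S1_def using am' by simp
    then show ?thesis using S1_sub_S by auto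
  next
    case False
    then have a2: "a \<in> S2" using a unfolding S_def by auto
    note A = S2_elim[OF a2, folded d_def]
    define e where "e = d - u + 1"
    define b where "b = a(k := a k - e)"
    have ni: "\<not> inc d" using A(2) .
    have u1: "1 \<le> u" "u \<le> d" using notinc[OF ni] by auto
    have bT: "b \<in> T" and rb: "of_nat (rank b) < h d" and ek: "e \<le> a k"
      using A unfolding b_def e_def by auto
    have e1: "e \<ge> 1" unfolding e_def by simp
    have hdd: "h d \<le> h (d - 1)" using noninc[OF ni, of "d - 1" d] u1 by simp
    have iu: "inc (u - 1)" using notinc(3)[OF ni] .
    show ?thesis
    proof (cases "i = k")
      case True
      show ?thesis
      proof (cases "d = u")
        case True
        then have "?a = b" using \<open>i = k\<close> unfolding b_def e_def by (auto simp: fun_eq_iff)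
        then show ?thesis using bT T_sub_S by auto
      next
        case False
        have ni': "\<not> inc (d - 1)" using notinc(4)[OF ni, of "d - 1"] False u1 by simp
        have "?a \<in> S2"
        proof (rule S2_intro[OF am' dd(1) ni'])
          show "d - 1 - u + 1 \<le> ?a k" using ek \<open>i = k\<close> False u1 unfolding e_def by auto
          show "?a(k := ?a k - (d - 1 - u + 1)) = b"
            using ek \<open>i = k\<close> False u1 unfolding b_def e_def by (auto simp: fun_eq_iff)
          show "b \<in> T" by (rule bT)
          show "of_nat (rank b) < h (d - 1)" using rb hdd by simp
        qed
        then show ?thesis unfolding S_def by auto
      qed
    next
      case False
      then have ik: "i < k" using i by simp
      define b' where "b' = (b(i := b i - 1))(k := b k + 1)"
      have bm: "b \<in> monomials (Suc k)" using bT T_sub by auto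
      have bi: "b i = a i" using False unfolding b_def by simp
      have b'm: "b' \<in> monomials (Suc k)"
        unfolding b'_def by (intro monomials_upd) (use bm i in auto)
      have db': "mdeg (Suc k) b' = u - 1"
      proof -
        have "mdeg (Suc k) (b(i := b i - 1)) = mdeg (Suc k) b - 1"
          using mdeg_upd_dec[of i "Suc k" b] i bi by simp
        moreover have "mdeg (Suc k) b > 0" using mdeg_upd_dec[of i "Suc k" b] i bi by simp
        moreover have "(b(i := b i - 1)) k = b k" using False by simp
        ultimately show ?thesis unfolding b'_def using shift_mdeg[of "b(i := b i - 1)" 1] T_deg[OF bT]
          by simp
      qed
      have b1: "b \<in> S1" using bT unfolding T_def by auto
      have b0: "b(k := 0) \<in> S0" using b1 unfolding S1_def by auto
      have "b'(k := 0) = (b(k := 0))(i := b i - 1)" unfolding b'_def using False by (auto simp: fun_eq_iff)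
      moreover have "(b(k := 0))(i := b i - 1) \<in> monomials k"
        using monomials_upd[OF monomials_Suc_k0[OF bm] ik] by simp
      moreover have "mdvd ((b(k := 0))(i := b i - 1)) (b(k := 0))" unfolding mdvd_def using False by auto
      ultimately have b'0: "b'(k := 0) \<in> S0" using S0_div[OF b0] by simp
      have b'T: "b' \<in> T" by (rule T_intro[OF b'm db' iu b'0])
      have "revlex_gt (Suc k) b b'"
        by (rule R1) (use db' T_deg[OF bT] in \<open>auto simp: b'_def\<close>)
      then have rb': "rank b' < rank b" by (rule rank_less[OF bT b'T])
      show ?thesis
      proof (cases "d = u")
        case True
        then have "?a = b'" using False ek i unfolding b'_def b_def e_def by (auto simp: fun_eq_iff)
        then show ?thesis using b'T T_sub_S by auto
      next
        case dne: False
        have ni': "\<not> inc (d - 1)" using notinc(4)[OF ni, of "d - 1"] dne u1 by simp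
        have "?a \<in> S2"
        proof (rule S2_intro[OF am' dd(1) ni'])
          show "d - 1 - u + 1 \<le> ?a k" using ek False dne u1 unfolding e_def by auto
          show "?a(k := ?a k - (d - 1 - u + 1)) = b'"
            using ek False dne u1 unfolding b'_def b_def e_def by (auto simp: fun_eq_iff)
          show "b' \<in> T" by (rule b'T)
          show "of_nat (rank b') < h (d - 1)" using rb hdd rb' by (meson of_nat_less_iff less_trans order_less_le_trans)
        qed
        then show ?thesis unfolding S_def by auto
      qed
    qed
  qed
qed

lemma ideal: "monomial_ideal (Suc k) (monomials (Suc k) - S)"
  by (rule monomial_ideal_compl[OF S_sub S_div_step])

lemma S_deg_inc: "a \<in> S \<Longrightarrow> inc (mdeg (Suc k) a) \<Longrightarrow> a \<in> S1"
  unfolding S_def S2_def by auto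

lemma S_deg_ninc: "a \<in> S \<Longrightarrow> \<not> inc (mdeg (Suc k) a) \<Longrightarrow> a \<in> S2"
  unfolding S_def S1_def by auto

lemma K0_sub: "K0 \<subseteq> monomials k" using K0i unfolding monomial_ideal_def by auto

lemma almost: "almost_revlex (Suc k) (monomials (Suc k) - S)"
  unfolding almost_revlex_def
proof (intro ballI impI)
  fix M N
  assume M: "M \<in> monomials (Suc k)" and N: "N \<in> min_gens (Suc k) (monomials (Suc k) - S)"
    and c: "mdeg (Suc k) M = mdeg (Suc k) N \<and> revlex_gt (Suc k) M N"
  have Nm: "N \<in> monomials (Suc k)" "N \<notin> S" using N unfolding min_gens_def by auto
  have Nmin: "N(i := N i - 1) \<in> S" if "i < Suc k" "N i > 0" for i
  proof (rule ccontr)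
    assume "N(i := N i - 1) \<notin> S"
    moreover have "N(i := N i - 1) \<in> monomials (Suc k)" using monomials_upd[OF Nm(1) that(1)] .
    moreover have "mdvd (N(i := N i - 1)) N" unfolding mdvd_def by auto
    ultimately have "N(i := N i - 1) = N" using N unfolding min_gens_def by blast
    then have "N i - 1 = N i" by (metis fun_upd_same)
    then show False using that(2) by simp
  qed
  define d where "d = mdeg (Suc k) N"
  have Md: "mdeg (Suc k) M = d" using c d_def by simp
  have gt: "revlex_gt (Suc k) M N" using c by simp
  show "M \<in> monomials (Suc k) - S"
  proof (rule ccontr)
    assume "M \<notin> monomials (Suc k) - S"
    then have MS: "M \<in> S" using M by simp
    show False
    proof (cases "inc d")
      case True
      have Nk: "N k = 0"
      proof (rule ccontr)
        assume "N k \<noteq> 0"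
        then have N': "N(k := N k - 1) \<in> S" using Nmin[of k] by simp
        have "mdeg (Suc k) (N(k := N k - 1)) = d - 1" using mdeg_upd_dec[of k "Suc k" N] \<open>N k \<noteq> 0\<close> d_def by simp
        then have "inc (mdeg (Suc k) (N(k := N k - 1)))" using True inc_mono by simp
        then have "N(k := N k - 1) \<in> S1" using S_deg_inc N' by simp
        then have "N(k := 0) \<in> S0" unfolding S1_def by simp
        then have "N \<in> S1" unfolding S1_def using Nm True d_def by simp
        then show False using Nm S1_sub_S by auto
      qed
      have Mk: "M k = 0"
      proof (rule ccontr)
        assume "M k \<noteq> 0"
        then have "revlex_gt (Suc k) N M" using R1[of k N M] Md d_def Nk by simp
        then show False using gt revlex_asym by blast
      qed
      have M1: "M \<in> S1" using S_deg_inc MS Md True by simp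
      have Mk': "M(k := 0) = M" "N(k := 0) = N" using Mk Nk by auto
      have MS0: "M \<in> S0" using M1 Mk' unfolding S1_def by simp
      have Nmk: "N \<in> monomials k" using monomials_Suc_k0[OF Nm(1)] Mk' by simp
      have Mmk: "M \<in> monomials k" using monomials_Suc_k0[OF M] Mk' by simp
      have NS0: "N \<notin> S0"
      proof
        assume "N \<in> S0"
        then have "N \<in> S1" unfolding S1_def using Nm True d_def Mk' by simp
        then show False using Nm S1_sub_S by auto
      qed
      have NK0: "N \<in> min_gens k K0"
        unfolding min_gens_def
      proof (intro CollectI conjI ballI impI)
        show "N \<in> K0" using NS0 Nmk unfolding S0_def by simp
        fix b assume b: "b \<in> K0" "mdvd b N"
        show "b = N"
        proof (rule ccontr)
          assume "b \<noteq> N"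
          then obtain i where "b i \<noteq> N i" by auto
          then have bi: "b i < N i" using b(2) unfolding mdvd_def by (metis le_neq_implies_less)
          have ik: "i < k"
          proof (rule ccontr)
            assume "\<not> i < k"
            then have "N i = 0" using Nmk unfolding monomials_def by auto
            then show False using bi by simp
          qed
          let ?N = "N(i := N i - 1)"
          have N'S: "?N \<in> S" using Nmin[of i] ik bi by simp
          have "mdeg (Suc k) ?N = d - 1" using mdeg_upd_dec[of i "Suc k" N] ik bi d_def by simp
          then have "inc (mdeg (Suc k) ?N)" using True inc_mono by simp
          then have "?N \<in> S1" using S_deg_inc N'S by simp
          moreover have "?N(k := 0) = ?N" using Nk ik by (auto simp: fun_eq_iff)
          ultimately have N'0: "?N \<in> S0" unfolding S1_def by simp
          have "b \<in> monomials k" using b(1) K0_sub by auto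
          moreover have "mdvd b ?N" using b(2) bi unfolding mdvd_def by auto
          ultimately have "b \<in> S0" using S0_div[OF N'0] by simp
          then show False using b(1) unfolding S0_def by simp
        qed
      qed
      have "M \<in> K0"
        using K0a Mmk NK0 unfolding almost_revlex_def
        using Md d_def mdeg_k0[OF Mmk] mdeg_k0[OF Nmk] R2[OF Mmk Nmk] gt by auto
      then show False using MS0 unfolding S0_def by simp
    next
      case False
      note ni = False
      have u1: "1 \<le> u" "u \<le> d" using notinc[OF ni] by auto
      define e where "e = d - u + 1"
      have M2: "M \<in> S2" using S_deg_ninc MS Md ni by simp
      note A = S2_elim[OF M2, unfolded Md, folded e_def]
      define b where "b = M(k := M k - e)"
      have bT: "b \<in> T" and rb: "of_nat (rank b) < h d" and ek: "e \<le> M k"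
        using A unfolding b_def by auto
      have e1: "e \<ge> 1" unfolding e_def by simp
      show False
      proof (cases "e \<le> N k")
        case True
        define c where "c = N(k := N k - e)"
        have Mb: "M = b(k := b k + e)" using ek unfolding b_def by auto
        have Nc: "N = c(k := c k + e)" using True unfolding c_def by auto
        have bc: "revlex_gt (Suc k) b c" using gt R3[of k b e c] Mb Nc by simp
        show False
        proof (cases "c \<in> T")
          case True
          have "rank c < rank b" by (rule rank_less[OF bT True bc])
          then have "of_nat (rank c) < h d" using rb by (meson of_nat_less_iff order_less_trans)
          then have "N \<in> S2"
          proof (intro S2_intro[OF Nm(1) d_def[symmetric] ni])
            show "d - u + 1 \<le> N k" using \<open>e \<le> N k\<close> unfolding e_def .
            show "N(k := N k - (d - u + 1)) = c" unfolding c_def e_def ..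
            show "c \<in> T" by (rule True)
          qed
          then show False using Nm unfolding S_def by auto
        next
          case False
          have N'S: "N(k := N k - 1) \<in> S" using Nmin[of k] \<open>e \<le> N k\<close> e1 by simp
          have dN': "mdeg (Suc k) (N(k := N k - 1)) = d - 1"
            using mdeg_upd_dec[of k "Suc k" N] \<open>e \<le> N k\<close> e1 d_def by simp
          show False
          proof (cases "d = u")
            case True
            then have "N(k := N k - 1) = c" unfolding c_def e_def by simp
            moreover have "inc (d - 1)" using notinc(3)[OF ni] True by simp
            ultimately have "c \<in> S1" using S_deg_inc N'S dN' by simp
            then have "c \<in> T" unfolding T_def using \<open>N(k := N k - 1) = c\<close> dN' True by auto
            then show False using False by simp
          next
            case dne: False
            have ni': "\<not> inc (d - 1)" using notinc(4)[OF ni, of "d - 1"] dne u1 by simp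
            have "N(k := N k - 1) \<in> S2" using S_deg_ninc N'S dN' ni' by simp
            note B = S2_elim[OF this, unfolded dN']
            have ar: "N k - 1 - (d - 1 - u + 1) = N k - e"
              using dne u1 \<open>e \<le> N k\<close> unfolding e_def by arith
            have "(N(k := N k - 1))(k := (N(k := N k - 1)) k - (d - 1 - u + 1)) = c"
              unfolding c_def using ar by simp
            then show False using B(4) False by simp
          qed
        qed
      next
        case False
        show False
        proof (cases "N k \<ge> 1")
          case True
          have N'S: "N(k := N k - 1) \<in> S" using Nmin[of k] True by simp
          have dN': "mdeg (Suc k) (N(k := N k - 1)) = d - 1"
            using mdeg_upd_dec[of k "Suc k" N] True d_def by simp
          show False
          proof (cases "d = u")
            case True
            then show False using False \<open>N k \<ge> 1\<close> unfolding e_def by simp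
          next
            case dne: False
            have ni': "\<not> inc (d - 1)" using notinc(4)[OF ni, of "d - 1"] dne u1 by simp
            have "N(k := N k - 1) \<in> S2" using S_deg_ninc N'S dN' ni' by simp
            note B = S2_elim[OF this, unfolded dN']
            then show False using False dne u1 unfolding e_def by simp
          qed
        next
          case Nk0: False
          then have Nk: "N k = 0" by simp
          show False
          proof (cases "d = u")
            case True
            then have "N k < M k" using ek Nk unfolding e_def by simp
            then have "revlex_gt (Suc k) N M" using R1[of k N M] Md d_def by simp
            then show False using gt revlex_asym by blast
          next
            case dne: False
            have "d > 0" using u1 dne by simp
            then obtain i where i: "i < Suc k" "N i > 0" using mdeg_pos_ex[OF Nm(1)] d_def by auto
            have ik: "i \<noteq> k" using i Nk by auto
            have N'S: "N(i := N i - 1) \<in> S" using Nmin[OF i] .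
            have dN': "mdeg (Suc k) (N(i := N i - 1)) = d - 1"
              using mdeg_upd_dec[of i "Suc k" N] i d_def by simp
            have ni': "\<not> inc (d - 1)" using notinc(4)[OF ni, of "d - 1"] dne u1 by simp
            have "N(i := N i - 1) \<in> S2" using S_deg_ninc N'S dN' ni' by simp
            note B = S2_elim[OF this, unfolded dN']
            then show False using ik Nk dne u1 by simp
          qed
        qed
      qed
    qed
  qed
qed

theorem result: "\<exists>K. monomial_ideal (Suc k) K \<and> almost_revlex (Suc k) K \<and>
   (\<forall>d. of_nat (hilb_quot (Suc k) K d) = h d)"
  using ideal almost count by blast

end

lemma monomials_0: "monomials 0 = {\<lambda>_. 0}"
  unfolding monomials_def by auto

lemma construct:
  "fshape n h \<Longrightarrow> \<exists>K. monomial_ideal n K \<and> almost_revlex n K \<and> (\<forall>d. of_nat (hilb_quot n K d) = h d)"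
proof (induction n arbitrary: h)
  case 0
  then have h: "h = (\<lambda>d. if d = 0 then 1 else 0)" by simp
  have "monomial_ideal 0 {}" unfolding monomial_ideal_def by simp
  moreover have "almost_revlex 0 {}" unfolding almost_revlex_def min_gens_def by simp
  moreover have "of_nat (hilb_quot 0 {} d) = h d" for d
    unfolding hilb_quot_def monomials_0 h by (simp add: mdeg_def)
  ultimately show ?case by blast
next
  case (Suc k)
  then have A: "h 0 = 1" "\<And>d. h d \<in> \<nat>" "shp h" "fshape k (trunc_pos (Abs_fps h * (1 - fps_X)))"
    by auto
  obtain K0 where K0: "monomial_ideal k K0" "almost_revlex k K0"
    "\<forall>d. of_nat (hilb_quot k K0 d) = trunc_pos (Abs_fps h * (1 - fps_X)) d"
    using Suc.IH[OF A(4)] by blast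
  interpret stepctx h k K0
    using A K0 by unfold_locales auto
  show ?case by (rule result)
qed

theorem proposition4p6:
  fixes n :: nat and ds :: "nat list"
  assumes "\<forall>d\<in>set ds. d > 0"
  shows "\<exists>K. monomial_ideal (if n \<ge> 1 then n else 1) K
           \<and> almost_revlex (if n \<ge> 1 then n else 1) K
           \<and> (\<forall>d. of_nat (hilb_quot (if n \<ge> 1 then n else 1) K d) = froberg n ds d)"
proof (cases "n \<ge> 1")
  case True
  then show ?thesis using construct[OF fshape_froberg[OF assms, of n]] by simp
next
  case False
  then have "n = 0" by simp
  then have "fshape 1 (froberg n ds)" using fshape_0_1 fshape_froberg[OF assms, of n] by simp
  then show ?thesis using construct[of 1] False by simp
qed

end
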